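(* Fix $\gamma\in(0,1]$ and $0<\alpha<0.25$, and let $\xi>0$ be arbitrarily small. There exist $C>0$ and $N_0$ such that for all $N\ge N_0$, $$-\frac1N\sum_{i=1}^b\big[(J^T(s^* ))^{-1}\big]_{ii}\,\tilde f_i(s^* )\le\frac{C}{N^{1-2\alpha-3\xi}}.$$
   Context: Let $N\ge1$, $\lambda=1-\gamma/N^\alpha$, and $b=b(N)\ge1$ an integer with $b=O(\log N)$. The mean-field vector field is $f_k(s)=\lambda(s_{k-1}^2-s_k^2)-(s_k-s_{k+1})$, $k=1,\dots,b$, with $s_0=1,s_{b+1}=0$; $s^*$ is its unique equilibrium in $\{s\in\mathbb R^b:1\ge s_1\ge\cdots\ge s_b\ge0\}$. $J(s^* )$ is the $b\times b$ tridiagonal Jacobian of $f$ at $s^*$ with $J_{kk}=-2\lambda s^*_k-1$, $J_{k,k+1}=1$, $J_{k+1,k}=2\lambda s^*_k$. $\tilde f_i(s)=\frac12[\lambda(s_{i-1}^2-s_i^2)+(s_i-s_{i+1})]$. (In the paper $[(J^T(s^* ))^{-1}]_{ii}=\nabla^2g(s)_{ii}$ for the solution $g$ of $\nabla g(s)\cdot J(s^* )(s-s^* )=\|s-s^*\|^2$, and the lemma is stated for $s$ with $\|s-s^*\|^{2r}\le N^{-\epsilon}$; the quantity does not depend on $s$.) *)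

theory Defs
  imports Complex_Main "HOL-Library.Landau_Symbols" "Jordan_Normal_Form.Matrix"
begin

text \<open>Vectors s = (s_1,...,s_b) are represented as functions nat => real,
  with the boundary conventions s_0 = 1, s_(b+1) = 0 (and s_k = 0 for k > b+1).\<close>

definition lam :: "real \<Rightarrow> real \<Rightarrow> nat \<Rightarrow> real" where
  "lam \<gamma> \<alpha> N = 1 - \<gamma> / (real N) powr \<alpha>"

definition fmf :: "real \<Rightarrow> (nat \<Rightarrow> real) \<Rightarrow> nat \<Rightarrow> real" where
  "fmf l s k = l * ((s (k - 1))\<^sup>2 - (s k)\<^sup>2) - (s k - s (k + 1))"

definition ftil :: "real \<Rightarrow> (nat \<Rightarrow> real) \<Rightarrow> nat \<Rightarrow> real" where
  "ftil l s i = (l * ((s (i - 1))\<^sup>2 - (s i)\<^sup>2) + (s i - s (i + 1))) / 2"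

definition admissible :: "nat \<Rightarrow> (nat \<Rightarrow> real) \<Rightarrow> bool" where
  "admissible b s \<longleftrightarrow> s 0 = 1 \<and> (\<forall>k>b. s k = 0) \<and>
     (\<forall>k\<in>{1..b}. 0 \<le> s k \<and> s k \<le> s (k - 1))"

definition sstar :: "real \<Rightarrow> nat \<Rightarrow> nat \<Rightarrow> real" where
  "sstar l b = (THE s. admissible b s \<and> (\<forall>k\<in>{1..b}. fmf l s k = 0))"

text \<open>Jacobian J(s*) as a b x b matrix; row/column index i (0-based) corresponds to k = i+1.
  J_kk = -2 lambda s_k - 1, J_(k,k+1) = 1, J_(k+1,k) = 2 lambda s_k.\<close>
definition jac :: "real \<Rightarrow> nat \<Rightarrow> (nat \<Rightarrow> real) \<Rightarrow> real mat" where
  "jac l b s = mat b b (\<lambda>(i, j).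
      if j = i then - 2 * l * s (i + 1) - 1
      else if j = i + 1 then 1
      else if i = j + 1 then 2 * l * s (j + 1)
      else 0)"

definition matinv :: "real mat \<Rightarrow> real mat" where
  "matinv A = (THE B. B \<in> carrier_mat (dim_row A) (dim_row A) \<and>
       A * B = 1\<^sub>m (dim_row A) \<and> B * A = 1\<^sub>m (dim_row A))"

end

theory Submission
  imports Defs "Jordan_Normal_Form.Determinant"
begin


lemma rec_core:
  fixes a x :: "nat \<Rightarrow> real" and n i :: nat and c :: real
  assumes apos: "\<forall>k\<in>{1..n}. a k > 0"
    and rows: "\<forall>k\<in>{1..n}. x (k-1) - x k + a k * (x (k+1) - x k) = (if k = i then c else 0)"
  shows "\<forall>k\<le>n. (\<Prod>m\<in>{1..k}. a m) * (x k - x (Suc k)) = (x 0 - x 1) - (if i \<le> k \<and> 1 \<le> i then c * (\<Prod>m\<in>{1..i-1}. a m) else 0)"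
proof (intro allI impI)
  fix k assume "k \<le> n"
  then show "(\<Prod>m\<in>{1..k}. a m) * (x k - x (Suc k)) = (x 0 - x 1) - (if i \<le> k \<and> 1 \<le> i then c * (\<Prod>m\<in>{1..i-1}. a m) else 0)"
  proof (induction k)
    case 0
    then show ?case by auto
  next
    case (Suc k)
    have r: "x k - x (Suc k) + a (Suc k) * (x (Suc k + 1) - x (Suc k)) = (if Suc k = i then c else 0)"
      using rows Suc.prems by (metis One_nat_def Suc_eq_plus1 atLeastAtMost_iff diff_Suc_1 le_add2)
    have P: "(\<Prod>m\<in>{1..Suc k}. a m) = (\<Prod>m\<in>{1..k}. a m) * a (Suc k)"
      by (simp add: prod.nat_ivl_Suc')
    have r': "a (Suc k) * (x (Suc k) - x (Suc (Suc k))) = x k - x (Suc k) - (if Suc k = i then c else 0)"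
      using r by (simp add: algebra_simps)
    have "(\<Prod>m\<in>{1..Suc k}. a m) * (x (Suc k) - x (Suc (Suc k)))
       = (\<Prod>m\<in>{1..k}. a m) * (x k - x (Suc k) - (if Suc k = i then c else 0))"
      unfolding P mult.assoc r' by simp
    also have "\<dots> = (x 0 - x 1) - (if i \<le> k \<and> 1 \<le> i then c * (\<Prod>m\<in>{1..i-1}. a m) else 0)
         - (if Suc k = i then c * (\<Prod>m\<in>{1..k}. a m) else 0)"
    proof -
      have IH: "(\<Prod>m\<in>{1..k}. a m) * (x k - x (Suc k)) = (x 0 - x 1) - (if i \<le> k \<and> 1 \<le> i then c * (\<Prod>m\<in>{1..i-1}. a m) else 0)"
        using Suc by simp
      show ?thesis unfolding right_diff_distrib[of _ "x k - x (Suc k)"] IH by (cases "Suc k = i") auto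
    qed
    also have "\<dots> = (x 0 - x 1) - (if i \<le> Suc k \<and> 1 \<le> i then c * (\<Prod>m\<in>{1..i-1}. a m) else 0)"
      by (cases "Suc k = i") auto
    finally show ?case .
  qed
qed

lemma rec_main:
  fixes a x :: "nat \<Rightarrow> real" and n i :: nat and c :: real
  assumes apos: "\<forall>k\<in>{1..n}. a k > 0"
    and rows: "\<forall>k\<in>{1..n}. x (k-1) - x k + a k * (x (k+1) - x k) = (if k = i then c else 0)"
    and x0: "x 0 = 0" and xn: "x (Suc n) = 0" and i: "1 \<le> i" "i \<le> n" and c: "c \<ge> 0"
  shows "0 \<le> x 0 - x 1" "x 0 - x 1 \<le> c * (\<Prod>m\<in>{1..i-1}. a m)"
    "- x i \<le> c * (\<Sum>k<i. \<Prod>m\<in>{Suc k..i-1}. a m)" "0 \<le> - x i"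
proof -
  define d0 where "d0 = x 0 - x 1"
  define Q where "Q = c * (\<Prod>m\<in>{1..i-1}. a m)"
  have core: "\<forall>k\<le>n. (\<Prod>m\<in>{1..k}. a m) * (x k - x (Suc k)) = d0 - (if i \<le> k then Q else 0)"
    using rec_core[OF apos rows] i unfolding d0_def Q_def by auto
  have Ppos: "\<And>k. k \<le> n \<Longrightarrow> (\<Prod>m\<in>{1..k}. a m) > 0"
    using apos by (intro prod_pos) auto
  have anneg: "\<forall>m\<in>{1..i-1}. 0 \<le> a m" using apos i by (auto intro: less_imp_le)
  have Qnn: "Q \<ge> 0" unfolding Q_def using c anneg by (intro mult_nonneg_nonneg prod_nonneg) auto
  have sum0: "(\<Sum>k<Suc n. x k - x (Suc k)) = 0"
    using sum_lessThan_telescope'[of x "Suc n"] x0 xn by simp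
  have dk: "\<And>k. k \<le> n \<Longrightarrow> x k - x (Suc k) = (d0 - (if i \<le> k then Q else 0)) / (\<Prod>m\<in>{1..k}. a m)"
    using core Ppos by (metis less_irrefl nonzero_mult_div_cancel_left)
  show d0nn: "0 \<le> x 0 - x 1"
  proof (rule ccontr)
    assume "\<not> ?thesis"
    hence "d0 < 0" unfolding d0_def by simp
    hence "\<forall>k\<in>{..<Suc n}. x k - x (Suc k) < 0"
      using dk Ppos Qnn by (auto intro!: divide_neg_pos)
    hence "(\<Sum>k<Suc n. x k - x (Suc k)) < (\<Sum>k<Suc n. 0)" by (intro sum_strict_mono) auto
    with sum0 show False by simp
  qed
  have d0le: "x 0 - x 1 \<le> Q"
  proof (rule ccontr)
    assume "\<not> ?thesis"
    hence "d0 > Q" unfolding d0_def by simp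
    hence "\<forall>k\<in>{..<Suc n}. x k - x (Suc k) > 0"
      using dk Ppos Qnn by (auto intro!: divide_pos_pos)
    hence "(\<Sum>k<Suc n. x k - x (Suc k)) > (\<Sum>k<Suc n. 0)" by (intro sum_strict_mono) auto
    with sum0 show False by simp
  qed
  show "x 0 - x 1 \<le> c * (\<Prod>m\<in>{1..i-1}. a m)" using d0le unfolding Q_def by simp
  have xi: "- x i = (\<Sum>k<i. x k - x (Suc k))"
    using sum_lessThan_telescope'[of x i] x0 by simp
  have eq: "\<And>k. k < i \<Longrightarrow> x k - x (Suc k) = d0 / (\<Prod>m\<in>{1..k}. a m)"
    using dk i by auto
  have "- x i = (\<Sum>k<i. d0 / (\<Prod>m\<in>{1..k}. a m))" using xi eq by simp
  also have "\<dots> \<le> (\<Sum>k<i. Q / (\<Prod>m\<in>{1..k}. a m))"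
    using d0le Ppos i unfolding d0_def
    by (intro sum_mono divide_right_mono) (auto intro: less_imp_le)
  also have "\<dots> = c * (\<Sum>k<i. \<Prod>m\<in>{Suc k..i-1}. a m)"
    unfolding sum_distrib_left
  proof (rule sum.cong)
    fix k assume "k \<in> {..<i}"
    hence k: "k < i" by simp
    have split: "{1..i-1} = {1..k} \<union> {Suc k..i-1}" using k by auto
    have "(\<Prod>m\<in>{1..i-1}. a m) = (\<Prod>m\<in>{1..k}. a m) * (\<Prod>m\<in>{Suc k..i-1}. a m)"
      unfolding split by (subst prod.union_disjoint) auto
    moreover have "(\<Prod>m\<in>{1..k}. a m) > 0" using Ppos k i by simp
    ultimately show "Q / (\<Prod>m\<in>{1..k}. a m) = c * (\<Prod>m\<in>{Suc k..i-1}. a m)"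
      unfolding Q_def by (metis less_irrefl mult.left_commute nonzero_mult_div_cancel_left times_divide_eq_right)
  qed simp
  finally show "- x i \<le> c * (\<Sum>k<i. \<Prod>m\<in>{Suc k..i-1}. a m)" .
  have "0 \<le> (\<Sum>k<i. d0 / (\<Prod>m\<in>{1..k}. a m))"
    using d0nn Ppos i unfolding d0_def by (intro sum_nonneg divide_nonneg_pos) auto
  thus "0 \<le> - x i" using xi eq by simp
qed

lemma rec_homog:
  fixes a x :: "nat \<Rightarrow> real" and n :: nat
  assumes apos: "\<forall>k\<in>{1..n}. a k > 0"
    and rows: "\<forall>k\<in>{1..n}. x (k-1) - x k + a k * (x (k+1) - x k) = 0"
    and x0: "x 0 = 0" and xn: "x (Suc n) = 0"
  shows "\<forall>k\<le>n. x k = 0"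
proof (cases "n = 0")
  case True then show ?thesis using x0 by auto
next
  case False
  have rows': "\<forall>k\<in>{1..n}. x (k-1) - x k + a k * (x (k+1) - x k) = (if k = 1 then 0 else 0)"
    using rows by simp
  have "0 \<le> x 0 - x 1" "x 0 - x 1 \<le> 0 * (\<Prod>m\<in>{1..1-1}. a m)"
    using rec_main[OF apos rows' x0 xn] False by auto
  hence d0: "x 0 - x 1 = 0" by simp
  have core: "\<forall>k\<le>n. (\<Prod>m\<in>{1..k}. a m) * (x k - x (Suc k)) = 0"
    using rec_core[OF apos rows'] d0 by simp
  have dk: "\<And>k. k \<le> n \<Longrightarrow> x k - x (Suc k) = 0"
  proof -
    fix k assume k: "k \<le> n"
    have "(\<Prod>m\<in>{1..k}. a m) > 0" using apos k by (intro prod_pos) auto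
    moreover have "(\<Prod>m\<in>{1..k}. a m) * (x k - x (Suc k)) = 0" using core k by blast
    ultimately show "x k - x (Suc k) = 0" by (metis less_irrefl mult_eq_0_iff)
  qed
  show ?thesis
  proof (intro allI impI)
    fix k assume k: "k \<le> n"
    have "x 0 - x k = (\<Sum>j<k. x j - x (Suc j))" using sum_lessThan_telescope'[of x k] by simp
    also have "\<dots> = 0" using dk k by (intro sum.neutral) auto
    finally show "x k = 0" using x0 by simp
  qed
qed

lemma tpow_bound:
  fixes l :: real and t :: nat
  assumes "0 < l" "l < 1"
  shows "real t * l ^ t \<le> 1 / (1 - l)"
proof -
  have "1 + real t * (1 / l - 1) \<le> (1 + (1 / l - 1)) ^ t"
    using assms by (intro Bernoulli_inequality) (simp add: field_simps)
  hence B: "1 + real t * (1 / l - 1) \<le> (1 / l) ^ t" by simp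
  have e: "1 / l - 1 - (1 - l) = (1 - l)\<^sup>2 / l" using assms by (simp add: field_simps power2_eq_square)
  have "(1 - l)\<^sup>2 / l \<ge> 0" using assms by simp
  hence "1 - l \<le> 1 / l - 1" using e by linarith
  hence "real t * (1 - l) \<le> 1 + real t * (1 / l - 1)"
    by (smt (verit) mult_left_mono of_nat_0_le_iff)
  with B have "real t * (1 - l) \<le> (1 / l) ^ t" by linarith
  hence "real t * (1 - l) * l ^ t \<le> (1 / l) ^ t * l ^ t"
    using assms by (intro mult_right_mono) auto
  also have "\<dots> = 1" using assms by (simp add: power_mult_distrib[symmetric])
  finally show ?thesis using assms by (simp add: field_simps)
qed

lemma prod_bound:
  fixes a :: "nat \<Rightarrow> real" and l :: real and p q :: nat
  assumes l: "0 < l" "l < 1" and p: "1 \<le> p"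
    and a: "\<And>m. p \<le> m \<Longrightarrow> m \<le> q \<Longrightarrow> 0 \<le> a m \<and> a m \<le> 2 * l ^ (2 ^ m)"
  shows "(\<Prod>m\<in>{p..q}. a m) \<le> 1 / (1 - l)"
proof (cases "p \<le> q")
  case False
  hence "{p..q} = {}" by auto
  moreover have "1 \<le> 1 / (1 - l)" using l by simp
  ultimately show ?thesis by simp
next
  case True
  have split: "{p..q} = insert q {p..q-1}" using True p by auto
  have "(\<Prod>m\<in>{p..q}. a m) = a q * (\<Prod>m\<in>{p..q-1}. a m)"
    unfolding split using True p by (subst prod.insert) auto
  also have "\<dots> \<le> (2 * l ^ (2 ^ q)) * 2 ^ (q - 1)"
  proof (rule mult_mono)
    show "a q \<le> 2 * l ^ 2 ^ q" using a True by auto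
    show "(\<Prod>m\<in>{p..q-1}. a m) \<le> 2 ^ (q - 1)"
    proof (rule prod_le_power)
      fix m assume "m \<in> {p..q-1}"
      hence m: "p \<le> m" "m \<le> q" by auto
      have "l ^ (2 ^ m) \<le> 1" using l by (intro power_le_one) auto
      thus "0 \<le> a m \<and> a m \<le> 2" using a[OF m] by auto
    qed (use p in auto)
    show "0 \<le> 2 * l ^ 2 ^ q" using l by simp
    show "0 \<le> (\<Prod>m\<in>{p..q-1}. a m)" using a by (intro prod_nonneg) auto
  qed
  also have "\<dots> \<le> real (2 ^ q) * l ^ (2 ^ q)"
  proof -
    have "(2::real) * 2 ^ (q - 1) = 2 ^ q" using True p
      by (metis One_nat_def Suc_pred le_trans less_eq_Suc_le power_Suc zero_less_Suc)
    note eq = this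
    have "(2 * l ^ (2 ^ q)) * 2 ^ (q - 1) = ((2::real) * 2 ^ (q - 1)) * l ^ (2 ^ q)" by (simp add: ac_simps)
    also have "\<dots> = 2 ^ q * l ^ (2 ^ q)" by (simp only: eq)
    finally have X: "(2 * l ^ (2 ^ q)) * 2 ^ (q - 1) = 2 ^ q * l ^ (2 ^ q)" .
    show ?thesis unfolding X by simp
  qed
  also have "\<dots> \<le> 1 / (1 - l)" by (rule tpow_bound[OF l])
  finally show ?thesis .
qed

fun sq :: "real \<Rightarrow> real \<Rightarrow> nat \<Rightarrow> real" where
  "sq l x 0 = 1"
| "sq l x (Suc j) = l * ((sq l x j)\<^sup>2 - x\<^sup>2)"

lemma s_pow_bound:
  fixes s :: "nat \<Rightarrow> real" and l x :: real
  assumes l: "0 < l" and s0: "s 0 = 1"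
    and rec: "\<And>j. 1 \<le> j \<Longrightarrow> j \<le> n \<Longrightarrow> s j = l * ((s (j - 1))\<^sup>2 - x\<^sup>2)"
    and nn: "\<And>j. j \<le> n \<Longrightarrow> 0 \<le> s j"
  shows "m \<le> n \<Longrightarrow> s m \<le> l ^ (2 ^ m - 1)"
proof (induction m)
  case 0 then show ?case using s0 by simp
next
  case (Suc m)
  have "s (Suc m) = l * ((s m)\<^sup>2 - x\<^sup>2)" using rec[of "Suc m"] Suc.prems by simp
  also have "\<dots> \<le> l * (s m)\<^sup>2" using l by (simp add: mult_left_mono)
  also have "\<dots> \<le> l * (l ^ (2 ^ m - 1))\<^sup>2"
    using Suc nn[of m] l by (intro mult_left_mono power_mono) auto
  also have "\<dots> = l ^ (2 ^ Suc m - 1)"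
  proof -
    have "(2::nat) ^ Suc m - 1 = Suc (2 * (2 ^ m - 1))"
      by (induction m) (auto simp: algebra_simps)
    moreover have "\<And>e. l * (l ^ e)\<^sup>2 = l ^ Suc (2 * e)" by (metis power_Suc power_mult mult.commute)
    ultimately show ?thesis by simp
  qed
  finally show ?case .
qed



lemma eq_rec:
  assumes adm: "admissible b s" and eq: "\<forall>k\<in>{1..b}. fmf l s k = 0" and b: "b \<ge> 1"
  shows "\<forall>j\<in>{1..b}. s j = l * ((s (j-1))\<^sup>2 - (s b)\<^sup>2)"
proof -
  have sb1: "s (Suc b) = 0" using adm unfolding admissible_def by auto
  have "\<forall>t. t < b \<longrightarrow> s (b - t) = l * ((s (b - t - 1))\<^sup>2 - (s b)\<^sup>2)"
  proof (intro allI)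
    fix t show "t < b \<longrightarrow> s (b - t) = l * ((s (b - t - 1))\<^sup>2 - (s b)\<^sup>2)"
    proof (induction t)
      case 0
      have "fmf l s b = 0" using eq b by auto
      then show ?case using sb1 unfolding fmf_def by (simp add: algebra_simps)
    next
      case (Suc t)
      show ?case
      proof
        assume lt: "Suc t < b"
        have IH: "s (b - t) = l * ((s (b - t - 1))\<^sup>2 - (s b)\<^sup>2)" using Suc lt by simp
        have "fmf l s (b - Suc t) = 0" using eq lt by auto
        moreover have "b - Suc t + 1 = b - t" "b - t - 1 = b - Suc t" using lt by auto
        ultimately show "s (b - Suc t) = l * ((s (b - Suc t - 1))\<^sup>2 - (s b)\<^sup>2)"
          using IH unfolding fmf_def by (simp add: algebra_simps)
      qed
    qed
  qed
  then show ?thesis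
  proof (intro ballI)
    fix j assume j: "j \<in> {1..b}"
    assume H: "\<forall>t. t < b \<longrightarrow> s (b - t) = l * ((s (b - t - 1))\<^sup>2 - (s b)\<^sup>2)"
    from H[rule_format, of "b - j"] j show "s j = l * ((s (j-1))\<^sup>2 - (s b)\<^sup>2)" by auto
  qed
qed

lemma eq_sq:
  assumes adm: "admissible b s" and eq: "\<forall>k\<in>{1..b}. fmf l s k = 0" and b: "b \<ge> 1"
  shows "\<forall>j\<le>b. s j = sq l (s b) j"
proof (intro allI impI)
  fix j assume "j \<le> b"
  then show "s j = sq l (s b) j"
  proof (induction j)
    case 0 then show ?case using adm unfolding admissible_def by simp
  next
    case (Suc j)
    have r: "s (Suc j) = l * ((s j)\<^sup>2 - (s b)\<^sup>2)"
      using eq_rec[OF adm eq b] Suc.prems by (metis atLeastAtMost_iff diff_Suc_1 le_add1 plus_1_eq_Suc)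
    have IH: "s j = sq l (s b) j" using Suc by simp
    show ?case unfolding r sq.simps IH ..
  qed
qed

lemma sq_strict:
  assumes l: "0 < l" and x: "0 \<le> x" "x < x'" and nn: "\<forall>j\<in>{1..b}. sq l x' j \<ge> 0"
  shows "\<forall>j\<in>{1..b}. sq l x j > sq l x' j"
proof
  fix j assume "j \<in> {1..b}"
  hence "1 \<le> j" "j \<le> b" by auto
  then show "sq l x j > sq l x' j"
  proof (induction j rule: dec_induct)
    case base
    have "x\<^sup>2 < x'\<^sup>2" using x by (simp add: power_strict_mono)
    then show ?case using l by simp
  next
    case (step j)
    have "sq l x' j \<ge> 0" using nn step by auto
    hence "(sq l x' j)\<^sup>2 < (sq l x j)\<^sup>2" using step by (simp add: power_strict_mono)
    moreover have "x\<^sup>2 < x'\<^sup>2" using x by (simp add: power_strict_mono)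
    ultimately show ?case using l by simp
  qed
qed

lemma eq_unique:
  assumes l: "0 < l" and b: "b \<ge> 1"
    and A: "admissible b s" "\<forall>k\<in>{1..b}. fmf l s k = 0"
    and B: "admissible b s'" "\<forall>k\<in>{1..b}. fmf l s' k = 0"
  shows "s = s'"
proof -
  have es: "\<forall>j\<le>b. s j = sq l (s b) j" using eq_sq[OF A b] .
  have es': "\<forall>j\<le>b. s' j = sq l (s' b) j" using eq_sq[OF B b] .
  have nn: "\<forall>j\<in>{1..b}. 0 \<le> s j" "\<forall>j\<in>{1..b}. 0 \<le> s' j"
    using A(1) B(1) unfolding admissible_def by auto
  have sb: "0 \<le> s b" "0 \<le> s' b" using nn b by auto
  have xx: "s b = s' b"
  proof (rule ccontr)
    assume ne: "s b \<noteq> s' b"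
    show False
    proof (cases "s b < s' b")
      case True
      have "\<forall>j\<in>{1..b}. sq l (s' b) j \<ge> 0"
      proof
        fix j assume j: "j \<in> {1..b}"
        have "s' j = sq l (s' b) j" using j by (intro es'[rule_format]) auto
        thus "sq l (s' b) j \<ge> 0" using nn(2) j by metis
      qed
      from sq_strict[OF l sb(1) True this] b have "sq l (s b) b > sq l (s' b) b" by auto
      moreover have "s b = sq l (s b) b" "s' b = sq l (s' b) b"
        by (intro es[rule_format] es'[rule_format] order_refl)+
      ultimately show False using True by linarith
    next
      case False
      hence F: "s' b < s b" using ne by auto
      have "\<forall>j\<in>{1..b}. sq l (s b) j \<ge> 0"
      proof
        fix j assume j: "j \<in> {1..b}"
        have "s j = sq l (s b) j" using j by (intro es[rule_format]) auto
        thus "sq l (s b) j \<ge> 0" using nn(1) j by metis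
      qed
      from sq_strict[OF l sb(2) F this] b have "sq l (s' b) b > sq l (s b) b" by auto
      moreover have "s b = sq l (s b) b" "s' b = sq l (s' b) b"
        by (intro es[rule_format] es'[rule_format] order_refl)+
      ultimately show False using F by linarith
    qed
  qed
  show ?thesis
  proof
    fix j show "s j = s' j"
    proof (cases "j \<le> b")
      case True
      have "s j = sq l (s b) j" using True by (intro es[rule_format])
      moreover have "s' j = sq l (s' b) j" using True by (intro es'[rule_format])
      ultimately show ?thesis using xx by simp
    next
      case False then show ?thesis using A(1) B(1) unfolding admissible_def by auto
    qed
  qed
qed



lemma sqle: fixes x y :: real assumes "- x \<le> y" "y \<le> x" shows "y\<^sup>2 \<le> x\<^sup>2"
proof -
  have "(y - x) * (y + x) \<le> 0" using assms by (intro mult_nonpos_nonneg) auto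
  thus ?thesis by (simp add: power2_eq_square algebra_simps)
qed

lemma sq_cont: "isCont (\<lambda>x. sq l x j) x"
  by (induction j) (auto intro!: continuous_intros)

lemma sq_ge_negx:
  assumes "0 \<le> l" "l \<le> 1" "0 \<le> x" "x \<le> 1" "j \<ge> 1"
  shows "sq l x j \<ge> - x"
proof -
  obtain j' where j: "j = Suc j'" using assms by (cases j) auto
  have "sq l x j \<ge> - l * x\<^sup>2" using assms unfolding j
    by (simp add: algebra_simps mult_nonneg_nonneg)
  moreover have "l * x\<^sup>2 \<le> x"
  proof -
    have "l * x\<^sup>2 \<le> 1 * x\<^sup>2" using assms by (intro mult_right_mono) auto
    also have "\<dots> \<le> x" using assms by (simp add: power2_eq_square mult_left_le)
    finally show ?thesis .
  qed
  ultimately show ?thesis by linarith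
qed

lemma sq_zero_nonneg: "0 \<le> l \<Longrightarrow> sq l 0 j \<ge> 0"
  by (induction j) auto

lemma eq_exists:
  assumes l: "0 < l" "l \<le> 1" and b: "b \<ge> 1"
  shows "\<exists>s. admissible b s \<and> (\<forall>k\<in>{1..b}. fmf l s k = 0)"
proof -
  define g where "g x = sq l x b - x" for x
  have g0: "g 0 \<ge> 0" unfolding g_def using sq_zero_nonneg l by simp
  have sq1: "\<forall>j\<ge>1. sq l 1 j \<le> 0 \<and> sq l 1 j \<ge> -1"
  proof (intro allI impI)
    fix j :: nat assume "j \<ge> 1"
    then show "sq l 1 j \<le> 0 \<and> sq l 1 j \<ge> -1"
    proof (induction j rule: dec_induct)
      case base then show ?case by simp
    next
      case (step j)
      have "(sq l 1 j)\<^sup>2 \<le> 1" using step by (simp add: abs_square_le_1)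
      hence "sq l 1 (Suc j) \<le> 0" using l by (simp add: mult_nonneg_nonpos)
      moreover have "sq l 1 (Suc j) \<ge> -1" using sq_ge_negx[of l 1 "Suc j"] l by simp
      ultimately show ?case by simp
    qed
  qed
  have g1: "g 1 \<le> 0" unfolding g_def using sq1 b by auto
  have "\<exists>x\<ge>0. x \<le> 1 \<and> g x = 0"
    by (rule IVT2[of g 1 0 0, OF g1 g0]) (auto simp: g_def[abs_def] intro!: continuous_intros sq_cont)
  then obtain x where x: "0 \<le> x" "x \<le> 1" "sq l x b = x" unfolding g_def by auto
  have gex: "\<forall>j\<le>b. sq l x j \<ge> x"
  proof (cases "x = 0")
    case True then show ?thesis using sq_zero_nonneg l by auto
  next
    case False
    hence xp: "x > 0" using x by simp
    show ?thesis
    proof (rule ccontr)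
      assume "\<not> ?thesis"
      then obtain j where j: "j \<le> b" "sq l x j < x" by auto
      have j1: "j \<ge> 1" using j x by (cases j) auto
      have jb: "j < b" using j x by (cases "j = b") auto
      have "\<forall>m. j < m \<longrightarrow> sq l x m \<le> 0"
      proof (intro allI impI)
        fix m assume "j < m"
        hence "Suc j \<le> m" by simp
        then show "sq l x m \<le> 0"
        proof (induction m rule: dec_induct)
          case base
          have "sq l x j \<ge> -x" using sq_ge_negx[of l x j] l x j1 by simp
          hence "(sq l x j)\<^sup>2 \<le> x\<^sup>2" using j by (intro sqle) auto
          then show ?case using l by (simp add: mult_nonneg_nonpos)
        next
          case (step m)
          have "sq l x m \<ge> -x" using sq_ge_negx[of l x m] l x step by simp
          hence "(sq l x m)\<^sup>2 \<le> x\<^sup>2" using step xp by (intro sqle) auto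
          then show ?case using l by (simp add: mult_nonneg_nonpos)
        qed
      qed
      hence "sq l x b \<le> 0" using jb by simp
      with x xp show False by simp
    qed
  qed
  define s where "s k = (if k \<le> b then sq l x k else 0)" for k
  have mono: "\<forall>j\<in>{1..b}. sq l x j \<le> sq l x (j - 1)"
  proof
    fix j assume "j \<in> {1..b}"
    hence "1 \<le> j" "j \<le> b" by auto
    then show "sq l x j \<le> sq l x (j - 1)"
    proof (induction j rule: dec_induct)
      case base
      have h: "0 \<le> 1 - x\<^sup>2" "1 - x\<^sup>2 \<le> 1" using x by (auto simp: power_le_one)
      have "l * (1 - x\<^sup>2) \<le> 1" using h l by (intro mult_le_one) auto
      then show ?case by simp
    next
      case (step j)
      have "x \<le> sq l x j" using gex \<open>Suc j \<le> b\<close> by simp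
      hence a: "0 \<le> sq l x j" using x by linarith
      have "sq l x j \<le> sq l x (j - 1)" using step by simp
      hence "(sq l x j)\<^sup>2 \<le> (sq l x (j-1))\<^sup>2" using a by (simp add: power_mono)
      moreover obtain j' where "j = Suc j'" using step by (cases j) auto
      ultimately show ?case using l by (simp add: mult_left_mono)
    qed
  qed
  have adm: "admissible b s"
    unfolding admissible_def
  proof (intro conjI allI impI ballI)
    show "s 0 = 1" by (simp add: s_def)
    fix k
    show "b < k \<Longrightarrow> s k = 0" by (simp add: s_def)
  next
    fix k assume k: "k \<in> {1..b}"
    have sk: "s k = sq l x k" "s (k - 1) = sq l x (k - 1)" using k by (auto simp: s_def)
    have "x \<le> sq l x k" using gex k by simp
    thus "0 \<le> s k" using sk x by linarith
    show "s k \<le> s (k - 1)" using sk mono k by simp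
  qed
  have alg: "\<And>A B C. B = l * (A\<^sup>2 - x\<^sup>2) \<Longrightarrow> C = l * (B\<^sup>2 - x\<^sup>2) \<Longrightarrow>
      l * (A\<^sup>2 - B\<^sup>2) - (B - C) = 0"
    by (simp add: algebra_simps)
  have eqs: "\<forall>k\<in>{1..b}. fmf l s k = 0"
  proof
    fix k assume k: "k \<in> {1..b}"
    obtain k' where k': "k = Suc k'" using k by (cases k) auto
    have sk: "s k = sq l x k" "s (k - 1) = sq l x k'" using k k' by (auto simp: s_def)
    have e2: "sq l x k = l * ((sq l x k')\<^sup>2 - x\<^sup>2)" unfolding k' by simp
    show "fmf l s k = 0"
    proof (cases "k = b")
      case True
      have "s (k + 1) = 0" using True by (simp add: s_def)
      moreover have "sq l x k = x" using True x by simp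
      ultimately show ?thesis unfolding fmf_def sk using e2 by simp
    next
      case False
      have "s (k + 1) = sq l x (Suc k)" using k False by (simp add: s_def)
      moreover have e1: "sq l x (Suc k) = l * ((sq l x k)\<^sup>2 - x\<^sup>2)" by (simp only: sq.simps)
      ultimately show ?thesis unfolding fmf_def sk using alg[OF e2 e1] by simp
    qed
  qed
  show ?thesis using adm eqs by blast
qed

lemma sstar_props:
  assumes "0 < l" "l \<le> 1" "b \<ge> 1"
  shows "admissible b (sstar l b) \<and> (\<forall>k\<in>{1..b}. fmf l (sstar l b) k = 0)"
proof -
  have "\<exists>!s. admissible b s \<and> (\<forall>k\<in>{1..b}. fmf l s k = 0)"
    using eq_exists[OF assms] eq_unique[OF assms(1,3)] by blast
  then show ?thesis unfolding sstar_def by (rule theI')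
qed



lemma jacT_carrier: "transpose_mat (jac l b s) \<in> carrier_mat b b"
  unfolding jac_def by simp

lemma jacT_row:
  fixes v :: "real vec"
  assumes v: "v \<in> carrier_vec b" and r: "r < b"
  defines "X \<equiv> (\<lambda>m. if 1 \<le> m \<and> m \<le> b then v $ (m - 1) else 0)"
  shows "(transpose_mat (jac l b s) *\<^sub>v v) $ r
     = X r - X (r + 1) + (2 * l * s (r + 1)) * (X (r + 2) - X (r + 1))"
proof -
  let ?A = "transpose_mat (jac l b s)"
  have dA: "dim_row ?A = b" "dim_col ?A = b" unfolding jac_def by auto
  have "(?A *\<^sub>v v) $ r = row ?A r \<bullet> v" using dA r by simp
  also have "\<dots> = (\<Sum>c\<in>{0..<b}. ?A $$ (r, c) * v $ c)"
    unfolding scalar_prod_def using v dA r by (intro sum.cong) auto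
  also have "\<dots> = (\<Sum>c\<in>{0..<b}. (if c = r then (- 2 * l * s (r + 1) - 1) * v $ r else 0)
      + (if 1 \<le> r \<and> c = r - 1 then v $ (r - 1) else 0)
      + (if c = r + 1 then 2 * l * s (r + 1) * v $ (r + 1) else 0))"
  proof (intro sum.cong refl)
    fix c assume c: "c \<in> {0..<b}"
    have "?A $$ (r, c) = jac l b s $$ (c, r)" using c r dA unfolding jac_def by auto
    also have "\<dots> = (if r = c then - 2 * l * s (c + 1) - 1
      else if r = c + 1 then 1 else if c = r + 1 then 2 * l * s (r + 1) else 0)"
      using c r unfolding jac_def by auto
    finally show "?A $$ (r, c) * v $ c = (if c = r then (- 2 * l * s (r + 1) - 1) * v $ r else 0)
      + (if 1 \<le> r \<and> c = r - 1 then v $ (r - 1) else 0)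
      + (if c = r + 1 then 2 * l * s (r + 1) * v $ (r + 1) else 0)"
      by auto
  qed
  also have "\<dots> = (- 2 * l * s (r + 1) - 1) * v $ r
      + (if 1 \<le> r then v $ (r - 1) else 0)
      + (if r + 1 < b then 2 * l * s (r + 1) * v $ (r + 1) else 0)"
  proof -
    have s1: "(\<Sum>c\<in>{0..<b}. (if c = r then (- 2 * l * s (r + 1) - 1) * v $ r else 0)) = (- 2 * l * s (r + 1) - 1) * v $ r"
      using r by (subst sum.delta) auto
    have s2: "(\<Sum>c\<in>{0..<b}. (if 1 \<le> r \<and> c = r - 1 then v $ (r - 1) else 0)) = (if 1 \<le> r then v $ (r - 1) else 0)"
    proof (cases "1 \<le> r")
      case True then show ?thesis using r by (simp add: sum.delta)
    qed simp
    have s3: "(\<Sum>c\<in>{0..<b}. (if c = r + 1 then 2 * l * s (r + 1) * v $ (r + 1) else 0)) = (if r + 1 < b then 2 * l * s (r + 1) * v $ (r + 1) else 0)"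
      by (subst sum.delta) auto
    show ?thesis unfolding sum.distrib s1 s2 s3 ..
  qed
  also have "\<dots> = X r - X (r + 1) + (2 * l * s (r + 1)) * (X (r + 2) - X (r + 1))"
    unfolding X_def using r by (auto simp: algebra_simps)
  finally show ?thesis .
qed

lemma sq_zero_pos: "0 < l \<Longrightarrow> sq l 0 j > 0"
  by (induction j) auto

lemma eq_pos:
  assumes l: "0 < l" and b: "b \<ge> 1" and adm: "admissible b s" and eq: "\<forall>k\<in>{1..b}. fmf l s k = 0"
  shows "\<forall>k\<le>b. s k > 0"
proof -
  have es: "\<forall>j\<le>b. s j = sq l (s b) j" using eq_sq[OF adm eq b] .
  have sbpos: "s b > 0"
  proof (rule ccontr)
    assume "\<not> ?thesis"
    moreover have "s b \<ge> 0" using adm b unfolding admissible_def by auto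
    ultimately have z: "s b = 0" by simp
    have "s b = sq l (s b) b" by (rule es[rule_format]) simp
    hence "s b = sq l 0 b" using z by simp
    with sq_zero_pos[OF l, of b] z show False by simp
  qed
  show ?thesis
  proof (intro allI impI)
    fix k assume "k \<le> b"
    then have "s b \<le> s k"
    proof (induction k rule: inc_induct)
      case base then show ?case by simp
    next
      case (step n)
      have "s (Suc n) \<le> s n" using adm step unfolding admissible_def by force
      with step show ?case by simp
    qed
    with sbpos show "s k > 0" by simp
  qed
qed

lemma diag_bound:
  assumes l: "0 < l" "l < 1" and b: "b \<ge> 1" and adm: "admissible b s"
    and eq: "\<forall>k\<in>{1..b}. fmf l s k = 0" and i: "1 \<le> i" "i \<le> b"
  shows "0 \<le> - (matinv (transpose_mat (jac l b s))) $$ (i - 1, i - 1)"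
    "- (matinv (transpose_mat (jac l b s))) $$ (i - 1, i - 1) \<le> real b / (1 - l)"
proof -
  define A where "A = transpose_mat (jac l b s)"
  have A: "A \<in> carrier_mat b b" unfolding A_def by (rule jacT_carrier)
  define a where "a k = 2 * l * s k" for k
  have spos: "\<forall>k\<le>b. s k > 0" using eq_pos[OF l(1) b adm eq] .
  have apos: "\<forall>k\<in>{1..b}. a k > 0" using spos l unfolding a_def by auto
  have s0: "s 0 = 1" and sb1: "s (Suc b) = 0" using adm unfolding admissible_def by auto
  have rowsX: "\<forall>k\<in>{1..b}. X (k - 1) - X k + a k * (X (k + 1) - X k) = (A *\<^sub>v v) $ (k - 1)"
    if v: "v \<in> carrier_vec b" and X: "X = (\<lambda>m. if 1 \<le> m \<and> m \<le> b then v $ (m - 1) else 0)" for v X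
  proof
    fix k assume k: "k \<in> {1..b}"
    have "(A *\<^sub>v v) $ (k - 1) = X (k - 1) - X (k - 1 + 1) + (2 * l * s (k - 1 + 1)) * (X (k - 1 + 2) - X (k - 1 + 1))"
      unfolding A_def X using jacT_row[OF v, of "k - 1" l s] k by auto
    also have "\<dots> = X (k - 1) - X k + a k * (X (k + 1) - X k)"
      using k unfolding a_def by (simp add: numeral_2_eq_2)
    finally show "X (k - 1) - X k + a k * (X (k + 1) - X k) = (A *\<^sub>v v) $ (k - 1)" by simp
  qed
  have detA: "det A \<noteq> 0"
  proof
    assume "det A = 0"
    then obtain v where v: "v \<in> carrier_vec b" "v \<noteq> 0\<^sub>v b" "A *\<^sub>v v = 0\<^sub>v b"
      using det_0_iff_vec_prod_zero[OF A] by auto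
    define X where "X = (\<lambda>m. if 1 \<le> m \<and> m \<le> b then v $ (m - 1) else 0)"
    have rows: "\<forall>k\<in>{1..b}. X (k - 1) - X k + a k * (X (k + 1) - X k) = 0"
      using rowsX[OF v(1) X_def] v(3) by auto
    have "\<forall>k\<le>b. X k = 0"
      by (rule rec_homog[OF apos rows]) (auto simp: X_def)
    hence "v = 0\<^sub>v b"
    proof (intro eq_vecI)
      fix j assume H: "\<forall>k\<le>b. X k = 0" and j: "j < dim_vec (0\<^sub>v b :: real vec)"
      have "X (Suc j) = 0" using H j by simp
      thus "v $ j = 0\<^sub>v b $ j" using j unfolding X_def by simp
    qed (use v in auto)
    with v(2) show False by simp
  qed
  have "A \<in> Units (ring_mat TYPE(real) b ())" by (rule det_non_zero_imp_unit[OF A detA])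
  then obtain B where B: "B \<in> carrier_mat b b" "A * B = 1\<^sub>m b" "B * A = 1\<^sub>m b"
    unfolding Units_def ring_mat_def by auto
  have dA: "dim_row A = b" using A by simp
  have mi: "matinv A = B"
    unfolding matinv_def dA
  proof (rule the_equality)
    show "B \<in> carrier_mat b b \<and> A * B = 1\<^sub>m b \<and> B * A = 1\<^sub>m b" using B by simp
    fix B' assume H: "B' \<in> carrier_mat b b \<and> A * B' = 1\<^sub>m b \<and> B' * A = 1\<^sub>m b"
    have "B' = B' * (A * B)" using B H by (auto simp: right_mult_one_mat)
    also have "\<dots> = (B' * A) * B" using H by (intro assoc_mult_mat[symmetric, OF _ A B(1), of _ b]) simp
    also have "\<dots> = B" using B H by (auto simp: left_mult_one_mat)
    finally show "B' = B" .
  qed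
  define v where "v = col B (i - 1)"
  have v: "v \<in> carrier_vec b" unfolding v_def using B col_dim[of B "i - 1"] by simp
  have Av: "A *\<^sub>v v = unit_vec b (i - 1)"
  proof -
    have "A *\<^sub>v v = col (A * B) (i - 1)" unfolding v_def using i by (intro col_mult2[symmetric, OF A B(1)]) simp
    also have "\<dots> = unit_vec b (i - 1)" using B i by simp
    finally show ?thesis .
  qed
  define X where "X = (\<lambda>m. if 1 \<le> m \<and> m \<le> b then v $ (m - 1) else 0)"
  have rows: "\<forall>k\<in>{1..b}. X (k - 1) - X k + a k * (X (k + 1) - X k) = (if k = i then 1 else 0)"
  proof
    fix k assume k: "k \<in> {1..b}"
    have "X (k - 1) - X k + a k * (X (k + 1) - X k) = (A *\<^sub>v v) $ (k - 1)"
      using rowsX[OF v X_def] k by blast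
    also have "\<dots> = (if k = i then 1 else 0)" unfolding Av using k i by auto
    finally show "X (k - 1) - X k + a k * (X (k + 1) - X k) = (if k = i then 1 else 0)" .
  qed
  have RM: "- X i \<le> 1 * (\<Sum>k<i. \<Prod>m\<in>{Suc k..i-1}. a m)" "0 \<le> - X i"
    using rec_main[OF apos rows _ _ i] by (auto simp: X_def)
  have Xi: "X i = matinv (transpose_mat (jac l b s)) $$ (i - 1, i - 1)"
    unfolding X_def v_def A_def[symmetric] mi using i B by simp
  show "0 \<le> - (matinv (transpose_mat (jac l b s))) $$ (i - 1, i - 1)" using RM(2) Xi by simp
  have rec: "\<And>j. 1 \<le> j \<Longrightarrow> j \<le> b \<Longrightarrow> s j = l * ((s (j - 1))\<^sup>2 - (s b)\<^sup>2)"
    by (rule eq_rec[OF adm eq b, rule_format]) simp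
  have nn: "\<And>j. j \<le> b \<Longrightarrow> 0 \<le> s j" using spos by (auto intro: less_imp_le)
  have abound: "\<And>m. 1 \<le> m \<Longrightarrow> m \<le> b \<Longrightarrow> 0 \<le> a m \<and> a m \<le> 2 * l ^ (2 ^ m)"
  proof -
    fix m :: nat assume m: "1 \<le> m" "m \<le> b"
    have "s m \<le> l ^ (2 ^ m - 1)" using s_pow_bound[OF l(1) s0 rec nn m(2)] by simp
    hence "a m \<le> 2 * l * l ^ (2 ^ m - 1)" unfolding a_def using l by simp
    also have "\<dots> = 2 * l ^ (2 ^ m)"
    proof -
      have "Suc (2 ^ m - 1) = (2::nat) ^ m" by simp
      hence "l * l ^ (2 ^ m - 1) = l ^ (2 ^ m)" by (metis power_Suc)
      thus ?thesis by simp
    qed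
    finally show "0 \<le> a m \<and> a m \<le> 2 * l ^ (2 ^ m)" using apos m by (auto intro: less_imp_le)
  qed
  have "(\<Sum>k<i. \<Prod>m\<in>{Suc k..i-1}. a m) \<le> (\<Sum>k<i. 1 / (1 - l))"
  proof (rule sum_mono)
    fix k assume k: "k \<in> {..<i}"
    show "(\<Prod>m\<in>{Suc k..i-1}. a m) \<le> 1 / (1 - l)"
      by (rule prod_bound[OF l]) (use abound i in auto)
  qed
  also have "\<dots> = real i / (1 - l)" by simp
  also have "\<dots> \<le> real b / (1 - l)" using i l by (simp add: divide_right_mono)
  finally show "- (matinv (transpose_mat (jac l b s))) $$ (i - 1, i - 1) \<le> real b / (1 - l)"
    using RM(1) Xi by simp
qed



theorem lemma11:
  fixes \<gamma> \<alpha> \<xi> :: real and b :: "nat \<Rightarrow> nat"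
  assumes "0 < \<gamma>" and "\<gamma> \<le> 1"
    and "0 < \<alpha>" and "\<alpha> < 1/4"
    and "0 < \<xi>"
    and "\<forall>N\<ge>1. b N \<ge> 1"
    and "(\<lambda>N. real (b N)) \<in> O(\<lambda>N. ln (real N))"
  shows "\<exists>C>0. \<exists>N0. \<forall>N\<ge>N0.
     - (1 / real N) * (\<Sum>i=1..b N.
         (matinv (transpose_mat (jac (lam \<gamma> \<alpha> N) (b N) (sstar (lam \<gamma> \<alpha> N) (b N)))))
            $$ (i - 1, i - 1)
         * ftil (lam \<gamma> \<alpha> N) (sstar (lam \<gamma> \<alpha> N) (b N)) i)
     \<le> C / (real N) powr (1 - 2 * \<alpha> - 3 * \<xi>)"
proof -
  note g = assms(1,2) and al = assms(3,4) and xi = assms(5) and b1 = assms(6)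
  obtain K where K: "K > 0" "eventually (\<lambda>N. norm (real (b N)) \<le> K * norm (ln (real N))) at_top"
    using assms(7) by (elim landau_o.bigE)
  then obtain N1 where N1: "\<And>N. N \<ge> N1 \<Longrightarrow> real (b N) \<le> K * \<bar>ln (real N)\<bar>"
    unfolding eventually_at_top_linorder by auto
  define C where "C = K / (\<xi> * \<gamma>)"
  have Cpos: "C > 0" unfolding C_def using K g xi by simp
  show ?thesis
  proof (intro exI[of _ C] conjI Cpos exI[of _ "max N1 2"] allI impI)
    fix N :: nat assume N: "max N1 2 \<le> N"
    have N2: "N \<ge> 2" and NN1: "N \<ge> N1" using N by auto
    have Npos: "real N > 0" using N2 by simp
    have N1r: "real N > 1" using N2 by simp
    define l where "l = lam \<gamma> \<alpha> N"
    define bb where "bb = b N"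
    define s where "s = sstar l bb"
    define P where "P = real N powr \<alpha>"
    define Q where "Q = real N powr \<xi>"
    have Pgt: "P > 1" unfolding P_def using N1r al by (intro gr_one_powr) auto
    have Qpos: "Q > 0" unfolding Q_def using Npos by simp
    have l_eq: "1 - l = \<gamma> / P" unfolding l_def lam_def P_def by simp
    have lpos: "0 < l"
    proof -
      have "\<gamma> / P < 1" using Pgt g by (simp add: divide_less_eq)
      thus ?thesis using l_eq by simp
    qed
    have "\<gamma> / P > 0" using g Pgt by simp
    hence llt: "l < 1" using l_eq by linarith
    have bb1: "bb \<ge> 1" unfolding bb_def using b1 N2 by simp
    have sp: "admissible bb s \<and> (\<forall>k\<in>{1..bb}. fmf l s k = 0)"
      unfolding s_def using sstar_props[of l bb] lpos llt bb1 by simp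
    hence adm: "admissible bb s" and eq: "\<forall>k\<in>{1..bb}. fmf l s k = 0" by auto
    define M where "M = matinv (transpose_mat (jac l bb s))"
    have ft: "\<And>i. i \<in> {1..bb} \<Longrightarrow> ftil l s i = s i - s (i + 1)"
    proof -
      fix i assume "i \<in> {1..bb}"
      hence "fmf l s i = 0" using eq by blast
      hence h: "l * ((s (i - 1))\<^sup>2 - (s i)\<^sup>2) = s i - s (i + 1)" unfolding fmf_def by linarith
      show "ftil l s i = s i - s (i + 1)" unfolding ftil_def h by simp
    qed
    have ftnn: "\<And>i. i \<in> {1..bb} \<Longrightarrow> 0 \<le> s i - s (i + 1)"
    proof -
      fix i assume i: "i \<in> {1..bb}"
      show "0 \<le> s i - s (i + 1)"
      proof (cases "i = bb")
        case True
        have "s (i + 1) = 0" "0 \<le> s i" using adm i True unfolding admissible_def by auto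
        thus ?thesis by simp
      next
        case False
        hence "i + 1 \<in> {1..bb}" using i by auto
        hence "s (i + 1) \<le> s i" using adm unfolding admissible_def by force
        thus ?thesis by simp
      qed
    qed
    have tele: "(\<Sum>i=1..bb. s i - s (i + 1)) = s 1 - s (Suc bb)"
    proof -
      have "(\<Sum>i=1..bb. s (Suc i) - s i) = s (Suc bb) - s 1" by (rule sum_Suc_diff) (use bb1 in simp)
      moreover have "(\<Sum>i=1..bb. s i - s (i + 1)) = - (\<Sum>i=1..bb. s (Suc i) - s i)"
        by (simp add: sum_negf[symmetric])
      ultimately show ?thesis by simp
    qed
    have s1: "s 1 \<le> 1" "s (Suc bb) = 0" using adm bb1 unfolding admissible_def by force+
    have "- (1 / real N) * (\<Sum>i=1..bb. M $$ (i - 1, i - 1) * ftil l s i)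
        = (1 / real N) * (\<Sum>i=1..bb. (- M $$ (i - 1, i - 1)) * (s i - s (i + 1)))"
      by (simp add: ft sum_negf)
    also have "\<dots> \<le> (1 / real N) * (\<Sum>i=1..bb. (real bb / (1 - l)) * (s i - s (i + 1)))"
    proof (intro mult_left_mono sum_mono)
      fix i assume i: "i \<in> {1..bb}"
      have "- M $$ (i - 1, i - 1) \<le> real bb / (1 - l)"
        unfolding M_def using diag_bound(2)[OF lpos llt bb1 adm eq, of i] i by simp
      thus "(- M $$ (i - 1, i - 1)) * (s i - s (i + 1)) \<le> (real bb / (1 - l)) * (s i - s (i + 1))"
        using ftnn[OF i] by (rule mult_right_mono)
    qed simp
    also have "\<dots> = (1 / real N) * (real bb / (1 - l)) * s 1"
      by (simp only: sum_distrib_left[symmetric] tele s1 diff_zero mult.assoc)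
    also have "\<dots> \<le> (1 / real N) * (real bb / (1 - l))"
    proof -
      have Z: "0 \<le> (1 / real N) * (real bb / (1 - l))" using llt Npos by simp
      show ?thesis using mult_left_mono[OF s1(1) Z] by simp
    qed
    also have "\<dots> = real bb * P / (\<gamma> * real N)" unfolding l_eq using g Pgt by (simp add: field_simps)
    also have "\<dots> \<le> (K * (Q / \<xi>)) * P / (\<gamma> * real N)"
    proof -
      have lnN: "ln (real N) \<ge> 0" using N1r by simp
      have "\<xi> * ln (real N) = ln Q" unfolding Q_def using Npos by (simp add: ln_powr)
      also have "\<dots> \<le> Q - 1" using Qpos by (rule ln_le_minus_one)
      finally have "ln (real N) \<le> Q / \<xi>" using xi by (simp add: field_simps)
      hence "real bb \<le> K * (Q / \<xi>)" using N1[OF NN1] lnN K unfolding bb_def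
        by (smt (verit) mult_left_mono)
      thus ?thesis using Pgt g Npos by (intro divide_right_mono mult_right_mono) auto
    qed
    also have "\<dots> = C * (Q * P / real N)" unfolding C_def using xi g Npos by (simp add: field_simps)
    also have "\<dots> \<le> C / real N powr (1 - 2 * \<alpha> - 3 * \<xi>)"
    proof -
      have "Q * P / real N = real N powr (\<xi> + \<alpha> - 1)"
        unfolding Q_def P_def using Npos by (simp add: powr_add powr_diff)
      also have "\<dots> \<le> real N powr (2 * \<alpha> + 3 * \<xi> - 1)"
        using N1r al xi by (intro powr_mono) auto
      also have "\<dots> = 1 / real N powr (1 - 2 * \<alpha> - 3 * \<xi>)"
      proof -
        have "2 * \<alpha> + 3 * \<xi> - 1 = - (1 - 2 * \<alpha> - 3 * \<xi>)" by simp
        thus ?thesis by (metis powr_minus_divide)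
      qed
      finally have "Q * P / real N \<le> 1 / real N powr (1 - 2 * \<alpha> - 3 * \<xi>)" .
      hence "C * (Q * P / real N) \<le> C * (1 / real N powr (1 - 2 * \<alpha> - 3 * \<xi>))"
        using Cpos by (intro mult_left_mono) auto
      thus ?thesis by simp
    qed
    finally show "- (1 / real N) * (\<Sum>i=1..b N.
         (matinv (transpose_mat (jac (lam \<gamma> \<alpha> N) (b N) (sstar (lam \<gamma> \<alpha> N) (b N)))))
            $$ (i - 1, i - 1)
         * ftil (lam \<gamma> \<alpha> N) (sstar (lam \<gamma> \<alpha> N) (b N)) i)
     \<le> C / (real N) powr (1 - 2 * \<alpha> - 3 * \<xi>)"
      unfolding M_def s_def l_def bb_def .
  qed
qed


end
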